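(* Let $A,B,E,C$ define the stochastic system $X_{k+1}=AX_k+BU_k+EW_k$, $Y_k=CX_k$, with i.i.d. disturbances $W_k\in\mathcal L^2$ of known distribution, $(A,B)$ controllable, $(A,C)$ observable, and $T_{\mathrm{ini}}$ an integer not smaller than the lag of $(A,C)$. Assume it is equivalent to the VARX model $Y_k=\hat A\,Y_{[k-T_{\mathrm{ini}},k-1]}+\hat B\,U_{[k-T_{\mathrm{ini}},k-1]}+W_{k-1}$ with $\hat A\in\mathbb R^{n_y\times T_{\mathrm{ini}}n_y}$, $\hat B\in\mathbb R^{n_y\times T_{\mathrm{ini}}n_u}$, $W_k\in\mathcal L^2(\mathbb R^{n_y})$, and that the initial input-output trajectory $(U,Y)_{[1-T_{\mathrm{ini}},0]}$ is deterministic. Let $(u^{\mathrm{ud}},y^{\mathrm{ud}})_{[1-T_{\mathrm{ini}},T]}$ be real data with $y^{\mathrm{ud}}_k=\hat A\,y^{\mathrm{ud}}_{[k-T_{\mathrm{ini}},k-1]}+\hat B\,u^{\mathrm{ud}}_{[k-T_{\mathrm{ini}},k-1]}$ for all $k\in\mathbb I_{[1,T]}$, and let $N\in\mathbb N^+$ satisfy $\operatorname{rank}\begin{bmatrix}\mathcal H_{T_{\mathrm{ini}}+N}(u^{\mathrm{ud}}_{[1,T]})\\ \mathcal H_{T_{\mathrm{ini}}}(y^{\mathrm{ud}}_{[1,T-N]})\end{bmatrix}=(T_{\mathrm{ini}}+N)n_u+T_{\mathrm{ini}}n_y$. With the PCE notation of the context, fix $j\in\mathbb I_{[1,L-1]}$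 and write $k'=k'(j)$, $\bar N=N-k'$. Then real sequences $(\mathsf u^j,\mathsf y^j)_{[1,N]}$ form a trajectory of the $j$-th PCE coefficient dynamics, i.e. with $(\mathsf u^j,\mathsf y^j)_{[1-T_{\mathrm{ini}},0]}=0$, $$\mathsf y^j_k=\hat A\,\mathsf y^j_{[k-T_{\mathrm{ini}},k-1]}+\hat B\,\mathsf u^j_{[k-T_{\mathrm{ini}},k-1]}+\mathsf w^j_{k-1},\quad k\in\mathbb I_{[1,N]},$$ and the causality requirement $\mathsf u^j_k=0$ for $k\in\mathbb I_{[1,k']}$, if and only if there exists $\mathsf g^j\in\mathbb R^{T-N-T_{\mathrm{ini}}+1}$ such that $$(\mathsf u^j,\mathsf y^j)_{[1,k']}=0,\qquad \mathsf y^j_{k'+1}=\mathsf w^{I(j)},$$ $$\begin{bmatrix}\mathcal H_{T_{\mathrm{ini}}-1}(u^{\mathrm{ud}}_{[1,T-N-1]})\\ \mathcal H_{T_{\mathrm{ini}}-1}(y^{\mathrm{ud}}_{[1,T-N-1]})\\ \mathcal H_{\bar N}(u^{\mathrm{ud}}_{[T_{\mathrm{ini}},T-k'-1]})\\ \mathcal H_{\bar N}(y^{\mathrm{ud}}_{[T_{\mathrm{ini}},T-k'-1]})\end{bmatrix}\mathsf g^j=\begin{bmatrix}0_{(T_{\mathrm{ini}}-1)n_u\times1}\\ 0_{(T_{\mathrm{ini}}-1)n_y\times1}\\ \mathsf u^j_{[k'+1,N]}\\ \mathsf y^j_{[k'+1,N]}\end{bmatrix}.$$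
   Context: $\mathcal L^2(\mathbb R^n)$: $\mathbb R^n$-valued random variables with finite second moments. $\mathbb I_{[a,b]}=\{a,\dots,b\}$; $z_{[a,b]}=[z_a^\top,\dots,z_b^\top]^\top$. For $z_{[a,b]}$ with $z_k\in\mathbb R^n$ and $M\le b-a+1$, $\mathcal H_M(z_{[a,b]})$ is the $Mn\times(b-a-M+2)$ block Hankel matrix whose $(r,c)$ block is $z_{a+r+c-2}$. The lag of observable $(A,C)$ is the smallest $\ell$ with $[C^\top,\dots,(CA^{\ell-1})^\top]^\top$ of full column rank. PCE setup: each $W_k$ has an exact finite polynomial chaos expansion $W_k=\sum_{n=0}^{L_w-1}\mathsf w^n\psi^n(\xi_k)$ with $\mathsf w^n\in\mathbb R^{n_y}$, orthogonal polynomials $\psi^n$, $\psi^0=1$, and independent stochastic germs $\xi_k$ (same coefficients for all $k$). The joint basis $\{\phi^j\}_{j=0}^{L-1}$, $L=1+N(L_w-1)$, is $\phi^0=1$ and $\phi^{k(L_w-1)+n}=\psi^n(\xi_k)$ for $k\in\mathbb I_{[0,N-1]}$, $n\in\mathbb I_{[1,L_w-1]}$. Let $\mathcal I_k=\mathbb I_{[1+k(L_w-1),(k+1)(L_w-1)]}$; for $j\ge1$, $k'(j)$ is the $k$ with $j\in\mathcal I_k$, and $I(j)=j-k'(j)(L_w-1)$. The coefficients of $W_k$ in the joint basis are $\mathsf w^j_k=\mathbb E[W]$ if $j=0$, $\mathsf w^{I(j)}$ if $j\in\mathcal I_k$, and $0$ otherwise. The causality requirement stems from inputs/outputs at time $k$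 depending only on $W_0,\dots,W_{k-1}$. *)

theory Defs
  imports "Jordan_Normal_Form.DL_Rank"
begin

text \<open>Sequences of vectors in R^n are modelled as z :: int => nat => real, where
  z k i is the i-th component (i < n) of the vector at time k.\<close>

text \<open>Stacked vector z_[a,b] = [z_a; ...; z_b] with block size n.\<close>
definition stackv :: "nat \<Rightarrow> (int \<Rightarrow> nat \<Rightarrow> real) \<Rightarrow> int \<Rightarrow> int \<Rightarrow> real vec" where
  "stackv n z a b = vec (nat (b - a + 1) * n) (\<lambda>r. z (a + int (r div n)) (r mod n))"

text \<open>Block Hankel matrix H_M(z_[a,b]) with block size n: (M n) x (b-a-M+2) matrix
  whose (r,c) block (1-based) is z_(a+r+c-2).\<close>
definition hankel :: "nat \<Rightarrow> nat \<Rightarrow> (int \<Rightarrow> nat \<Rightarrow> real) \<Rightarrow> int \<Rightarrow> int \<Rightarrow> real mat" where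
  "hankel n M z a b = mat (M * n) (nat (b - a + 2 - int M))
     (\<lambda>(r, c). z (a + int (r div n) + int c) (r mod n))"

definition mrank :: "real mat \<Rightarrow> nat" where
  "mrank A = vec_space.rank (dim_row A) A"

definition zext :: "(int \<Rightarrow> nat \<Rightarrow> real) \<Rightarrow> int \<Rightarrow> nat \<Rightarrow> real" where
  "zext z k = (if k \<ge> 1 then z k else (\<lambda>_. 0))"

text \<open>PCE index bookkeeping: for j >= 1, k'(j) is the k with j in
  I_k = [1 + k(Lw-1), (k+1)(Lw-1)], and I(j) = j - k'(j)(Lw-1).\<close>
definition kprime :: "nat \<Rightarrow> nat \<Rightarrow> nat" where
  "kprime Lw j = (j - 1) div (Lw - 1)"

definition pce_I :: "nat \<Rightarrow> nat \<Rightarrow> nat" where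
  "pce_I Lw j = j - kprime Lw j * (Lw - 1)"

text \<open>Coefficient w^j_k of W_k in the joint basis: EW if j = 0, w^(I(j)) if j in I_k,
  0 otherwise. Here w n is the n-th PCE coefficient vector of W.\<close>
definition pce_coef :: "(nat \<Rightarrow> real) \<Rightarrow> (nat \<Rightarrow> nat \<Rightarrow> real) \<Rightarrow> nat \<Rightarrow> nat \<Rightarrow> nat \<Rightarrow> nat \<Rightarrow> real" where
  "pce_coef EW w Lw j k = (if j = 0 then EW
     else if kprime Lw j = k then w (pce_I Lw j) else (\<lambda>_. 0))"

end

theory Submission
  imports Defs
begin

lemma (in vec_space) span_full:
  assumes S: "S \<subseteq> carrier_vec n" and fS: "finite S"
    and d: "vectorspace.dim class_ring (span_vs S) = n"
  shows "span S = carrier_vec n"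
proof -
  have sub: "submodule class_ring (span S) V" using S span_is_submodule by simp
  have W: "vectorspace class_ring (span_vs S)"
    using S span_is_subspace subspace_def subspace_is_vs by simp
  have fdW: "vectorspace.fin_dim class_ring (span_vs S)" using fin_dim_span[OF fS] S by simp
  obtain \<beta> where b: "finite \<beta>" "vectorspace.basis class_ring (span_vs S) \<beta>"
    using vectorspace.finite_basis_exists[OF W fdW] by blast
  have cb: "card \<beta> = n" using vectorspace.dim_basis[OF W b] d by simp
  have bS: "\<beta> \<subseteq> span S" using b(2) vectorspace.basis_def[OF W] by auto
  have liW: "LinearCombinations.module.lin_indpt class_ring (span_vs S) \<beta>"
    using b(2) vectorspace.basis_def[OF W] by auto
  have li: "lin_indpt \<beta>" using liW span_li_not_depend(2)[OF bS sub] by simp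
  have bC: "\<beta> \<subseteq> carrier_vec n" using bS span_is_subset2[of S] S by auto
  have "basis \<beta>"
    by (rule dim_li_is_basis[OF fin_dim b(1)], use bC li cb dim_is_n in auto)
  hence "span \<beta> = carrier_vec n" unfolding basis_def by auto
  moreover have "span \<beta> \<subseteq> span S"
    using span_is_monotone[OF bS] span_span[OF S] by simp
  moreover have "span S \<subseteq> carrier_vec n" using span_is_subset2[of S] S by auto
  ultimately show ?thesis by auto
qed

lemma full_rank_surj:
  fixes A :: "real mat"
  assumes A: "A \<in> carrier_mat n nc" and r: "mrank A = n" and b: "b \<in> carrier_vec n"
  shows "\<exists>g\<in>carrier_vec nc. A *\<^sub>v g = b"
proof -
  interpret VS: vec_space "TYPE(real)" n .
  have cs: "set (cols A) \<subseteq> carrier_vec n" using A cols_dim carrier_matD(1) by blast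
  have "VS.rank A = n" using r A unfolding mrank_def by simp
  hence "vectorspace.dim class_ring (VS.span_vs (set (cols A))) = n"
    unfolding VS.rank_def .
  hence sp: "VS.span (set (cols A)) = carrier_vec n"
    using VS.span_full[OF cs] by simp
  have "b \<in> VS.col_space A" unfolding VS.col_space_def sp using b .
  then show ?thesis using VS.col_space_eq[OF A] A by auto
qed

definition cmb :: "real vec \<Rightarrow> nat \<Rightarrow> (int \<Rightarrow> nat \<Rightarrow> real) \<Rightarrow> int \<Rightarrow> nat \<Rightarrow> real" where
  "cmb g C z t i = (\<Sum>c<C. g $ c * z (t + int c) i)"

lemma hankel_carrier: "hankel n M z a b \<in> carrier_mat (M*n) (nat (b - a + 2 - int M))"
  by (simp add: hankel_def)

lemma hankel_mult_index:
  assumes "dim_vec g = nat (b - a + 2 - int M)" "r < M*n"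
  shows "(hankel n M z a b *\<^sub>v g) $ r = cmb g (nat (b - a + 2 - int M)) z (a + int (r div n)) (r mod n)"
  using assms unfolding hankel_def cmb_def
  by (auto simp: scalar_prod_def atLeast0LessThan algebra_simps intro!: sum.cong)

lemma stackv_index: "r < nat (b - a + 1) * n \<Longrightarrow> stackv n z a b $ r = z (a + int (r div n)) (r mod n)"
  by (simp add: stackv_def)

lemma stackv_dim[simp]: "dim_vec (stackv n z a b) = nat (b - a + 1) * n"
  by (simp add: stackv_def)

lemma divmod_all: "(\<forall>r<M*(n::nat). P (r div n) (r mod n)) \<longleftrightarrow> (\<forall>s<M. \<forall>i<n. P s i)"
proof
  assume h: "\<forall>r<M*n. P (r div n) (r mod n)"
  show "\<forall>s<M. \<forall>i<n. P s i"
  proof (intro allI impI)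
    fix s i assume "s < M" "i < n"
    have "s*n + i < (s+1)*n" using \<open>i < n\<close> by simp
    also have "\<dots> \<le> M*n" using \<open>s < M\<close> by (intro mult_le_mono1) simp
    finally have "s*n + i < M*n" .
    with h have "P ((s*n+i) div n) ((s*n+i) mod n)" by blast
    thus "P s i" using \<open>i < n\<close> by simp
  qed
next
  assume h: "\<forall>s<M. \<forall>i<n. P s i"
  show "\<forall>r<M*n. P (r div n) (r mod n)"
  proof (intro allI impI)
    fix r assume r: "r < M*n"
    hence "n > 0" by (cases n) auto
    hence "r mod n < n" by simp
    moreover have "r div n < M" using r by (simp add: less_mult_imp_div_less)
    ultimately show "P (r div n) (r mod n)" using h by blast
  qed
qed

lemma stackv_cong:
  assumes "\<forall>s. a \<le> s \<and> s \<le> b \<longrightarrow> (\<forall>i<n. z1 s i = z2 (s + d) i)"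
  shows "stackv n z1 a b = stackv n z2 (a + d) (b + d)"
proof (rule eq_vecI)
  show "dim_vec (stackv n z1 a b) = dim_vec (stackv n z2 (a + d) (b + d))" by simp
  fix r assume r: "r < dim_vec (stackv n z2 (a + d) (b + d))"
  hence r': "r < nat (b - a + 1) * n" by simp
  hence "n > 0" by (cases n) auto
  have "r div n < nat (b - a + 1)" using r' by (simp add: less_mult_imp_div_less)
  hence "a \<le> a + int (r div n) \<and> a + int (r div n) \<le> b" by auto
  moreover have "r mod n < n" using \<open>n > 0\<close> by simp
  ultimately have "z1 (a + int (r div n)) (r mod n) = z2 (a + int (r div n) + d) (r mod n)"
    using assms by blast
  thus "stackv n z1 a b $ r = stackv n z2 (a + d) (b + d) $ r"
    using r' by (simp add: stackv_index algebra_simps)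
qed

lemma stack_zero_mult:
  assumes "\<forall>s. a \<le> s \<and> s \<le> b \<longrightarrow> (\<forall>i<n. z s i = 0)"
    and A: "A \<in> carrier_mat m (nat (b - a + 1) * n)" and i: "i < m"
  shows "(A *\<^sub>v stackv n z a b) $ i = 0"
proof -
  have "stackv n z a b = stackv n (\<lambda>_ _. 0) (a + 0) (b + 0)"
    by (rule stackv_cong, use assms in auto)
  also have "\<dots> = 0\<^sub>v (nat (b - a + 1) * n)" by (rule eq_vecI, auto simp: stackv_def)
  finally show ?thesis using A i by simp
qed

lemma mult_stack_cmb:
  assumes A: "A \<in> carrier_mat m (nat (b - a + 1) * n)" and i: "i < m"
  shows "(A *\<^sub>v stackv n (cmb g C z) a b) $ i
       = (\<Sum>c<C. g $ c * (A *\<^sub>v stackv n z (a + int c) (b + int c)) $ i)"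
  using A i unfolding cmb_def
  by (simp add: scalar_prod_def stackv_def sum_distrib_left sum.swap[of _ "{..<C}"] algebra_simps)


lemma varx_cmb:
  fixes Ahat Bhat :: "real mat"
  assumes A: "Ahat \<in> carrier_mat ny (Tini*ny)" and B: "Bhat \<in> carrier_mat ny (Tini*nu)"
  and dv: "\<forall>k\<in>{1..int T}. \<forall>i<ny. yud k i = (Ahat *\<^sub>v stackv ny yud (k - int Tini) (k - 1)
         + Bhat *\<^sub>v stackv nu uud (k - int Tini) (k - 1)) $ i"
  and t: "1 \<le> t" "t + int C - 1 \<le> int T" and i: "i < ny"
  shows "cmb g C yud t i = (Ahat *\<^sub>v stackv ny (cmb g C yud) (t - int Tini) (t - 1)
          + Bhat *\<^sub>v stackv nu (cmb g C uud) (t - int Tini) (t - 1)) $ i"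
proof -
  have L: "nat ((t - 1) - (t - int Tini) + 1) = Tini" by simp
  have A': "Ahat \<in> carrier_mat ny (nat ((t - 1) - (t - int Tini) + 1) * ny)" using A L by simp
  have B': "Bhat \<in> carrier_mat ny (nat ((t - 1) - (t - int Tini) + 1) * nu)" using B L by simp
  have "(Ahat *\<^sub>v stackv ny (cmb g C yud) (t - int Tini) (t - 1)
          + Bhat *\<^sub>v stackv nu (cmb g C uud) (t - int Tini) (t - 1)) $ i
      = (Ahat *\<^sub>v stackv ny (cmb g C yud) (t - int Tini) (t - 1)) $ i
          + (Bhat *\<^sub>v stackv nu (cmb g C uud) (t - int Tini) (t - 1)) $ i"
    using A B i by simp
  also have "\<dots> = (\<Sum>c<C. g $ c * (Ahat *\<^sub>v stackv ny yud (t - int Tini + int c) (t - 1 + int c)) $ i)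
       + (\<Sum>c<C. g $ c * (Bhat *\<^sub>v stackv nu uud (t - int Tini + int c) (t - 1 + int c)) $ i)"
    using mult_stack_cmb[OF A' i] mult_stack_cmb[OF B' i] by simp
  also have "\<dots> = (\<Sum>c<C. g $ c * yud (t + int c) i)"
  proof -
    have "g $ c * (Ahat *\<^sub>v stackv ny yud (t - int Tini + int c) (t - 1 + int c)) $ i
        + g $ c * (Bhat *\<^sub>v stackv nu uud (t - int Tini + int c) (t - 1 + int c)) $ i
        = g $ c * yud (t + int c) i" if c: "c < C" for c
    proof -
      have k: "t + int c \<in> {1..int T}" using t c by auto
      have e1: "t - int Tini + int c = (t + int c) - int Tini" "t - 1 + int c = (t + int c) - 1" by auto
      have "yud (t + int c) i = (Ahat *\<^sub>v stackv ny yud (t - int Tini + int c) (t - 1 + int c)) $ i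
           + (Bhat *\<^sub>v stackv nu uud (t - int Tini + int c) (t - 1 + int c)) $ i"
        using dv[rule_format, OF k i] A B i unfolding e1 by simp
      thus ?thesis by (simp add: distrib_left)
    qed
    thus ?thesis by (simp add: sum.distrib[symmetric])
  qed
  finally show ?thesis unfolding cmb_def by simp
qed

lemma vec_eq_idx: "dim_vec v = m \<Longrightarrow> dim_vec w = m \<Longrightarrow> (v = w) \<longleftrightarrow> (\<forall>r<m. v $ r = w $ r)"
  by (auto intro: eq_vecI)

lemma hankel_rows[simp]: "dim_row (hankel n M z a b) = M * n"
  by (simp add: hankel_def)

lemma hankel_dim: "dim_vec (hankel n M z a b *\<^sub>v g) = M * n"
  by (simp add: hankel_def)

lemma hankel_eq_stack:
  assumes g: "dim_vec g = nat (b - a + 2 - int M)" and L: "nat (b' - a' + 1) = M"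
  shows "(hankel n M z a b *\<^sub>v g = stackv n z' a' b') \<longleftrightarrow>
     (\<forall>s<M. \<forall>i<n. cmb g (nat (b - a + 2 - int M)) z (a + int s) i = z' (a' + int s) i)"
proof -
  have "(hankel n M z a b *\<^sub>v g = stackv n z' a' b') \<longleftrightarrow>
        (\<forall>r<M*n. (hankel n M z a b *\<^sub>v g) $ r = stackv n z' a' b' $ r)"
    by (rule vec_eq_idx, use L in \<open>simp_all add: hankel_dim\<close>)
  also have "\<dots> \<longleftrightarrow> (\<forall>r<M*n. cmb g (nat (b - a + 2 - int M)) z (a + int (r div n)) (r mod n)
        = z' (a' + int (r div n)) (r mod n))"
    using L g by (simp add: hankel_mult_index stackv_index del: index_mult_mat_vec)
  also have "\<dots> \<longleftrightarrow> (\<forall>s<M. \<forall>i<n. cmb g (nat (b - a + 2 - int M)) z (a + int s) i = z' (a' + int s) i)"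
    by (rule divmod_all)
  finally show ?thesis .
qed

lemma hankel_eq_zero:
  assumes g: "dim_vec g = nat (b - a + 2 - int M)"
  shows "(hankel n M z a b *\<^sub>v g = 0\<^sub>v (M*n)) \<longleftrightarrow>
     (\<forall>s<M. \<forall>i<n. cmb g (nat (b - a + 2 - int M)) z (a + int s) i = 0)"
proof -
  have "(hankel n M z a b *\<^sub>v g = 0\<^sub>v (M*n)) \<longleftrightarrow>
        (\<forall>r<M*n. (hankel n M z a b *\<^sub>v g) $ r = 0)"
    using vec_eq_idx[of "hankel n M z a b *\<^sub>v g" "M*n" "0\<^sub>v (M*n)"]
    by (simp add: hankel_dim del: index_mult_mat_vec)
  also have "\<dots> \<longleftrightarrow> (\<forall>r<M*n. cmb g (nat (b - a + 2 - int M)) z (a + int (r div n)) (r mod n) = 0)"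
    using g by (simp add: hankel_mult_index del: index_mult_mat_vec)
  also have "\<dots> \<longleftrightarrow> (\<forall>s<M. \<forall>i<n. cmb g (nat (b - a + 2 - int M)) z (a + int s) i = 0)"
    by (rule divmod_all)
  finally show ?thesis .
qed

theorem lemma4:
  fixes nu ny Tini N T Lw j :: nat
    and Ahat Bhat :: "real mat"
    and uud yud uj yj :: "int \<Rightarrow> nat \<Rightarrow> real"
    and EW :: "nat \<Rightarrow> real" and w :: "nat \<Rightarrow> nat \<Rightarrow> real"
  assumes Tini_pos: "Tini \<ge> 1"
    and N_pos: "N \<ge> 1"
    and T_ge: "Tini + N \<le> T"
    and Ahat_dim: "Ahat \<in> carrier_mat ny (Tini * ny)"
    and Bhat_dim: "Bhat \<in> carrier_mat ny (Tini * nu)"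
    and data_varx: "\<forall>k\<in>{1..int T}. \<forall>i<ny. yud k i =
        (Ahat *\<^sub>v stackv ny yud (k - int Tini) (k - 1)
         + Bhat *\<^sub>v stackv nu uud (k - int Tini) (k - 1)) $ i"
    and rank_cond: "mrank (hankel nu (Tini + N) uud 1 (int T)
                           @\<^sub>r hankel ny Tini yud 1 (int T - int N))
                    = (Tini + N) * nu + Tini * ny"
    and j_range: "1 \<le> j" "j \<le> N * (Lw - 1)"
  shows "((\<forall>k\<in>{1..int N}. \<forall>i<ny. yj k i =
             (Ahat *\<^sub>v stackv ny (zext yj) (k - int Tini) (k - 1)
              + Bhat *\<^sub>v stackv nu (zext uj) (k - int Tini) (k - 1)) $ i
             + pce_coef EW w Lw j (nat (k - 1)) i)
          \<and> (\<forall>k\<in>{1..int (kprime Lw j)}. \<forall>i<nu. uj k i = 0))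
     \<longleftrightarrow>
         (\<exists>g. g \<in> carrier_vec (T - N - Tini + 1)
            \<and> (\<forall>k\<in>{1..int (kprime Lw j)}. (\<forall>i<nu. uj k i = 0) \<and> (\<forall>i<ny. yj k i = 0))
            \<and> (\<forall>i<ny. yj (int (kprime Lw j) + 1) i = w (pce_I Lw j) i)
            \<and> (hankel nu (Tini - 1) uud 1 (int T - int N - 1)
               @\<^sub>r hankel ny (Tini - 1) yud 1 (int T - int N - 1)
               @\<^sub>r hankel nu (N - kprime Lw j) uud (int Tini) (int T - int (kprime Lw j) - 1)
               @\<^sub>r hankel ny (N - kprime Lw j) yud (int Tini) (int T - int (kprime Lw j) - 1))
              *\<^sub>v g
              = 0\<^sub>v ((Tini - 1) * nu) @\<^sub>v 0\<^sub>v ((Tini - 1) * ny)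
                @\<^sub>v stackv nu uj (int (kprime Lw j) + 1) (int N)
                @\<^sub>v stackv ny yj (int (kprime Lw j) + 1) (int N))"
proof -
  obtain K where K: "kprime Lw j = K" by simp
  have Lw2: "Lw \<ge> 2"
  proof (rule ccontr)
    assume "\<not> Lw \<ge> 2" hence "Lw - 1 = 0" by simp
    thus False using j_range by simp
  qed
  have KN: "K < N"
  proof -
    have "j - 1 < N * (Lw - 1)" using j_range Lw2 by linarith
    thus ?thesis using K unfolding kprime_def by (metis less_mult_imp_div_less mult.commute)
  qed
  have noise: "\<And>k. pce_coef EW w Lw j k = (if k = K then w (pce_I Lw j) else (\<lambda>_. 0))"
    using j_range K by (simp add: pce_coef_def)
  define C where "C = T - N - Tini + 1"
  define d where "d = int K + 1 - int Tini"
  have c1: "nat (int T - int N - 1 - 1 + 2 - int (Tini - 1)) = C"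
    using T_ge Tini_pos unfolding C_def by simp
  have c3: "nat (int T - int K - 1 - int Tini + 2 - int (N - K)) = C"
    using T_ge Tini_pos KN unfolding C_def by simp
  have cr1: "nat (int T - 1 + 2 - int (Tini + N)) = C"
    using T_ge Tini_pos unfolding C_def by simp
  have cr2: "nat (int T - int N - 1 + 2 - int Tini) = C"
    using T_ge Tini_pos unfolding C_def by simp
  have Ac: "\<And>k. Ahat \<in> carrier_mat ny (nat ((k - 1) - (k - int Tini) + 1) * ny)"
    using Ahat_dim by simp
  have Bc: "\<And>k. Bhat \<in> carrier_mat ny (nat ((k - 1) - (k - int Tini) + 1) * nu)"
    using Bhat_dim by simp
  have rhs0: "(Ahat *\<^sub>v stackv ny (zext yj) (k - int Tini) (k - 1)
              + Bhat *\<^sub>v stackv nu (zext uj) (k - int Tini) (k - 1)) $ i = 0"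
    if y0: "\<forall>s. 1 \<le> s \<and> s \<le> k - 1 \<longrightarrow> (\<forall>i<ny. yj s i = 0)"
      and u0: "\<forall>s. 1 \<le> s \<and> s \<le> k - 1 \<longrightarrow> (\<forall>i<nu. uj s i = 0)" and i: "i < ny" for k i
  proof -
    have a: "(Ahat *\<^sub>v stackv ny (zext yj) (k - int Tini) (k - 1)) $ i = 0"
      by (rule stack_zero_mult[OF _ Ac i]) (use y0 in \<open>auto simp: zext_def\<close>)
    have b: "(Bhat *\<^sub>v stackv nu (zext uj) (k - int Tini) (k - 1)) $ i = 0"
      by (rule stack_zero_mult[OF _ Bc i]) (use u0 in \<open>auto simp: zext_def\<close>)
    show ?thesis using a b i Ahat_dim Bhat_dim by simp
  qed
  have gdim: "\<And>g. g \<in> carrier_vec C \<Longrightarrow> dim_vec g = C" by simp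
  define H1 where "H1 = hankel nu (Tini - 1) uud 1 (int T - int N - 1)"
  define H2 where "H2 = hankel ny (Tini - 1) yud 1 (int T - int N - 1)"
  define H3 where "H3 = hankel nu (N - K) uud (int Tini) (int T - int K - 1)"
  define H4 where "H4 = hankel ny (N - K) yud (int Tini) (int T - int K - 1)"
  have H1c: "H1 \<in> carrier_mat ((Tini - 1) * nu) C"
    using hankel_carrier[of nu "Tini - 1" uud 1 "int T - int N - 1"] c1 unfolding H1_def by simp
  have H2c: "H2 \<in> carrier_mat ((Tini - 1) * ny) C"
    using hankel_carrier[of ny "Tini - 1" yud 1 "int T - int N - 1"] c1 unfolding H2_def by simp
  have H3c: "H3 \<in> carrier_mat ((N - K) * nu) C"
    using hankel_carrier[of nu "N - K" uud "int Tini" "int T - int K - 1"] c3 unfolding H3_def by simp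
  have H4c: "H4 \<in> carrier_mat ((N - K) * ny) C"
    using hankel_carrier[of ny "N - K" yud "int Tini" "int T - int K - 1"] c3 unfolding H4_def by simp
  have LNK: "nat (int N - (int K + 1) + 1) = N - K" using KN by simp
  have bigeq: "((H1 @\<^sub>r H2 @\<^sub>r H3 @\<^sub>r H4) *\<^sub>v g = 0\<^sub>v ((Tini - 1) * nu) @\<^sub>v 0\<^sub>v ((Tini - 1) * ny)
                @\<^sub>v stackv nu uj (int K + 1) (int N) @\<^sub>v stackv ny yj (int K + 1) (int N))
     \<longleftrightarrow> (\<forall>s<Tini - 1. \<forall>i<nu. cmb g C uud (1 + int s) i = 0)
       \<and> (\<forall>s<Tini - 1. \<forall>i<ny. cmb g C yud (1 + int s) i = 0)
       \<and> (\<forall>s<N - K. \<forall>i<nu. cmb g C uud (int Tini + int s) i = uj (int K + 1 + int s) i)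
       \<and> (\<forall>s<N - K. \<forall>i<ny. cmb g C yud (int Tini + int s) i = yj (int K + 1 + int s) i)" (is "?A \<longleftrightarrow> ?B")
    if gC: "g \<in> carrier_vec C" for g
  proof -
    have m: "(H1 @\<^sub>r H2 @\<^sub>r H3 @\<^sub>r H4) *\<^sub>v g = (H1 *\<^sub>v g) @\<^sub>v (H2 *\<^sub>v g) @\<^sub>v (H3 *\<^sub>v g) @\<^sub>v (H4 *\<^sub>v g)"
    proof -
      have c34: "H3 @\<^sub>r H4 \<in> carrier_mat ((N - K) * nu + (N - K) * ny) C" using H3c H4c by auto
      have c234: "H2 @\<^sub>r H3 @\<^sub>r H4 \<in> carrier_mat ((Tini - 1) * ny + ((N - K) * nu + (N - K) * ny)) C"
        using H2c c34 by auto
      show ?thesis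
        unfolding mat_mult_append[OF H1c c234 gC] mat_mult_append[OF H2c c34 gC]
          mat_mult_append[OF H3c H4c gC] ..
    qed
    have v1: "H1 *\<^sub>v g \<in> carrier_vec ((Tini - 1) * nu)" by (rule mult_mat_vec_carrier[OF H1c gC])
    have v2: "H2 *\<^sub>v g \<in> carrier_vec ((Tini - 1) * ny)" by (rule mult_mat_vec_carrier[OF H2c gC])
    have v3: "H3 *\<^sub>v g \<in> carrier_vec ((N - K) * nu)" by (rule mult_mat_vec_carrier[OF H3c gC])
    have s3: "stackv nu uj (int K + 1) (int N) \<in> carrier_vec ((N - K) * nu)"
      by (rule carrier_vecI, simp only: stackv_dim LNK)
    have "((H1 @\<^sub>r H2 @\<^sub>r H3 @\<^sub>r H4) *\<^sub>v g = 0\<^sub>v ((Tini - 1) * nu) @\<^sub>v 0\<^sub>v ((Tini - 1) * ny)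
                @\<^sub>v stackv nu uj (int K + 1) (int N) @\<^sub>v stackv ny yj (int K + 1) (int N))
       \<longleftrightarrow> H1 *\<^sub>v g = 0\<^sub>v ((Tini - 1) * nu) \<and> H2 *\<^sub>v g = 0\<^sub>v ((Tini - 1) * ny)
          \<and> H3 *\<^sub>v g = stackv nu uj (int K + 1) (int N) \<and> H4 *\<^sub>v g = stackv ny yj (int K + 1) (int N)"
      unfolding m using append_vec_eq[OF v1] append_vec_eq[OF v2] append_vec_eq[OF v3 s3] by simp
    also have "\<dots> \<longleftrightarrow> ?B"
    proof -
      have g1: "dim_vec g = nat (int T - int N - 1 - 1 + 2 - int (Tini - 1))" unfolding c1 using gC by (rule carrier_vecD)
      have g3: "dim_vec g = nat (int T - int K - 1 - int Tini + 2 - int (N - K))" unfolding c3 using gC by (rule carrier_vecD)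
      have e1: "H1 *\<^sub>v g = 0\<^sub>v ((Tini - 1) * nu) \<longleftrightarrow> (\<forall>s<Tini - 1. \<forall>i<nu. cmb g C uud (1 + int s) i = 0)"
        unfolding H1_def by (rule hankel_eq_zero[OF g1, unfolded c1])
      have e2: "H2 *\<^sub>v g = 0\<^sub>v ((Tini - 1) * ny) \<longleftrightarrow> (\<forall>s<Tini - 1. \<forall>i<ny. cmb g C yud (1 + int s) i = 0)"
        unfolding H2_def by (rule hankel_eq_zero[OF g1, unfolded c1])
      have e3: "H3 *\<^sub>v g = stackv nu uj (int K + 1) (int N) \<longleftrightarrow>
          (\<forall>s<N - K. \<forall>i<nu. cmb g C uud (int Tini + int s) i = uj (int K + 1 + int s) i)"
        unfolding H3_def by (rule hankel_eq_stack[OF g3 LNK, unfolded c3])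
      have e4: "H4 *\<^sub>v g = stackv ny yj (int K + 1) (int N) \<longleftrightarrow>
          (\<forall>s<N - K. \<forall>i<ny. cmb g C yud (int Tini + int s) i = yj (int K + 1 + int s) i)"
        unfolding H4_def by (rule hankel_eq_stack[OF g3 LNK, unfolded c3])
      show ?thesis unfolding e1 e2 e3 e4 ..
    qed
    finally show ?thesis .
  qed
  show ?thesis unfolding K H1_def[symmetric] H2_def[symmetric] H3_def[symmetric] H4_def[symmetric]
  proof
    assume L: "(\<forall>k\<in>{1..int N}. \<forall>i<ny. yj k i =
             (Ahat *\<^sub>v stackv ny (zext yj) (k - int Tini) (k - 1)
              + Bhat *\<^sub>v stackv nu (zext uj) (k - int Tini) (k - 1)) $ i
             + pce_coef EW w Lw j (nat (k - 1)) i)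
          \<and> (\<forall>k\<in>{1..int K}. \<forall>i<nu. uj k i = 0)"
    hence recf: "\<And>k i. k \<in> {1..int N} \<Longrightarrow> i < ny \<Longrightarrow> yj k i =
             (Ahat *\<^sub>v stackv ny (zext yj) (k - int Tini) (k - 1)
              + Bhat *\<^sub>v stackv nu (zext uj) (k - int Tini) (k - 1)) $ i
             + pce_coef EW w Lw j (nat (k - 1)) i"
      and caus: "\<forall>k\<in>{1..int K}. \<forall>i<nu. uj k i = 0" by auto
    have Z1: "\<forall>k. 1 \<le> k \<and> k \<le> int K \<longrightarrow> (\<forall>i<ny. yj k i = 0)"
    proof -
      have "\<forall>k. 1 \<le> k \<and> k \<le> int m \<longrightarrow> (\<forall>i<ny. yj k i = 0)" if "m \<le> K" for m
        using that
      proof (induction m)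
        case 0 show ?case by simp
      next
        case (Suc m)
        hence IH: "\<forall>k. 1 \<le> k \<and> k \<le> int m \<longrightarrow> (\<forall>i<ny. yj k i = 0)" by simp
        show ?case
        proof (intro allI impI)
          fix k i assume k: "1 \<le> k \<and> k \<le> int (Suc m)" and i: "i < ny"
          show "yj k i = 0"
          proof (cases "k \<le> int m")
            case True thus ?thesis using IH k i by auto
          next
            case False hence kk: "k = int m + 1" using k by auto
            have kN: "k \<in> {1..int N}" using kk Suc.prems KN by auto
            have "nat (k - 1) \<noteq> K" using kk Suc.prems by auto
            hence n0: "pce_coef EW w Lw j (nat (k - 1)) i = 0" using noise by simp
            have r0: "(Ahat *\<^sub>v stackv ny (zext yj) (k - int Tini) (k - 1)
              + Bhat *\<^sub>v stackv nu (zext uj) (k - int Tini) (k - 1)) $ i = 0"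
              by (rule rhs0) (use IH caus kk Suc.prems i in auto)
            show ?thesis using recf[OF kN i] n0 r0 by simp
          qed
        qed
      qed
      thus ?thesis by blast
    qed
    have Z2: "\<forall>i<ny. yj (int K + 1) i = w (pce_I Lw j) i"
    proof (intro allI impI)
      fix i assume i: "i < ny"
      have kN: "int K + 1 \<in> {1..int N}" using KN by auto
      have n0: "pce_coef EW w Lw j (nat (int K + 1 - 1)) i = w (pce_I Lw j) i" using noise by simp
      have r0: "(Ahat *\<^sub>v stackv ny (zext yj) (int K + 1 - int Tini) (int K + 1 - 1)
              + Bhat *\<^sub>v stackv nu (zext uj) (int K + 1 - int Tini) (int K + 1 - 1)) $ i = 0"
        by (rule rhs0) (use Z1 caus i in auto)
      show "yj (int K + 1) i = w (pce_I Lw j) i" using recf[OF kN i] n0 r0 by simp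
    qed
    have nTN: "nat (int Tini + int N) = Tini + N" by (metis nat_int of_nat_add)
    define Us where "Us = (\<lambda>s. zext uj (s + d))"
    define Ys where "Ys = (\<lambda>s. zext yj (s + d))"
    define HR1 where "HR1 = hankel nu (Tini + N) uud 1 (int T)"
    define HR2 where "HR2 = hankel ny Tini yud 1 (int T - int N)"
    have HR1c: "HR1 \<in> carrier_mat ((Tini + N) * nu) C"
      using hankel_carrier[of nu "Tini + N" uud 1 "int T"] unfolding HR1_def cr1 .
    have HR2c: "HR2 \<in> carrier_mat (Tini * ny) C"
      using hankel_carrier[of ny Tini yud 1 "int T - int N"] unfolding HR2_def cr2 .
    have Rc: "HR1 @\<^sub>r HR2 \<in> carrier_mat ((Tini + N) * nu + Tini * ny) C"
      by (rule carrier_append_rows[OF HR1c HR2c])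
    have bc: "stackv nu Us 1 (int (Tini + N)) @\<^sub>v stackv ny Ys 1 (int Tini)
        \<in> carrier_vec ((Tini + N) * nu + Tini * ny)"
      by (rule append_carrier_vec; rule carrier_vecI; simp add: nTN)
    obtain g where gC: "g \<in> carrier_vec C"
      and gR: "(HR1 @\<^sub>r HR2) *\<^sub>v g = stackv nu Us 1 (int (Tini + N)) @\<^sub>v stackv ny Ys 1 (int Tini)"
      using full_rank_surj[OF Rc rank_cond[folded HR1_def HR2_def] bc] by blast
    have "(HR1 *\<^sub>v g) @\<^sub>v (HR2 *\<^sub>v g) = stackv nu Us 1 (int (Tini + N)) @\<^sub>v stackv ny Ys 1 (int Tini)"
      using gR mat_mult_append[OF HR1c HR2c gC] by simp
    moreover have v1: "HR1 *\<^sub>v g \<in> carrier_vec ((Tini + N) * nu)" by (rule mult_mat_vec_carrier[OF HR1c gC])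
    moreover have s1: "stackv nu Us 1 (int (Tini + N)) \<in> carrier_vec ((Tini + N) * nu)"
      by (rule carrier_vecI) (simp add: nTN)
    ultimately have g12: "HR1 *\<^sub>v g = stackv nu Us 1 (int (Tini + N)) \<and> HR2 *\<^sub>v g = stackv ny Ys 1 (int Tini)"
      using append_vec_eq[OF v1 s1] by simp
    note g1 = g12[THEN conjunct1] and g2 = g12[THEN conjunct2]
    have gg1: "dim_vec g = nat (int T - 1 + 2 - int (Tini + N))" unfolding cr1 using gC by (rule carrier_vecD)
    have gg2: "dim_vec g = nat (int T - int N - 1 + 2 - int Tini)" unfolding cr2 using gC by (rule carrier_vecD)
    have L1: "nat (int (Tini + N) - 1 + 1) = Tini + N" by (simp add: nTN)
    have L2: "nat (int Tini - 1 + 1) = Tini" by simp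
    have HU0: "\<forall>s<Tini + N. \<forall>i<nu. cmb g C uud (1 + int s) i = Us (1 + int s) i"
      by (rule iffD1[OF hankel_eq_stack[OF gg1 L1, unfolded cr1] g1[unfolded HR1_def]])
    have HY0: "\<forall>s<Tini. \<forall>i<ny. cmb g C yud (1 + int s) i = Ys (1 + int s) i"
      by (rule iffD1[OF hankel_eq_stack[OF gg2 L2, unfolded cr2] g2[unfolded HR2_def]])
    have HU: "\<forall>t. 1 \<le> t \<and> t \<le> int (Tini + N) \<longrightarrow> (\<forall>i<nu. cmb g C uud t i = Us t i)"
    proof (intro allI impI)
      fix t i assume t: "1 \<le> t \<and> t \<le> int (Tini + N)" and i: "i < nu"
      have s: "nat (t - 1) < Tini + N" "1 + int (nat (t - 1)) = t" using t by auto
      have "cmb g C uud (1 + int (nat (t - 1))) i = Us (1 + int (nat (t - 1))) i" using HU0 s(1) i by blast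
      thus "cmb g C uud t i = Us t i" unfolding s(2) .
    qed
    have HY: "\<forall>t. 1 \<le> t \<and> t \<le> int Tini \<longrightarrow> (\<forall>i<ny. cmb g C yud t i = Ys t i)"
    proof (intro allI impI)
      fix t i assume t: "1 \<le> t \<and> t \<le> int Tini" and i: "i < ny"
      have s: "nat (t - 1) < Tini" "1 + int (nat (t - 1)) = t" using t by auto
      have "cmb g C yud (1 + int (nat (t - 1))) i = Ys (1 + int (nat (t - 1))) i" using HY0 s(1) i by blast
      thus "cmb g C yud t i = Ys t i" unfolding s(2) .
    qed
    have YA: "\<forall>t. 1 \<le> t \<and> t \<le> int Tini + int N - int K - 1 \<longrightarrow> (\<forall>i<ny. cmb g C yud t i = Ys t i)"
    proof -
      have "\<forall>t. 1 \<le> t \<and> t \<le> int m \<and> t \<le> int Tini + int N - int K - 1 \<longrightarrow> (\<forall>i<ny. cmb g C yud t i = Ys t i)" for m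
      proof (induction m)
        case 0 show ?case by simp
      next
        case (Suc m)
        show ?case
        proof (intro allI impI)
          fix t i assume t: "1 \<le> t \<and> t \<le> int (Suc m) \<and> t \<le> int Tini + int N - int K - 1" and i: "i < ny"
          show "cmb g C yud t i = Ys t i"
          proof (cases "t \<le> int m")
            case True thus ?thesis using Suc.IH t i by auto
          next
            case False hence tm: "t = int m + 1" using t by auto
            show ?thesis
            proof (cases "t \<le> int Tini")
              case True thus ?thesis using HY t i by auto
            next
              case tT0: False
              have tT: "t + int C - 1 \<le> int T" using t T_ge KN unfolding C_def by auto
              have v: "cmb g C yud t i = (Ahat *\<^sub>v stackv ny (cmb g C yud) (t - int Tini) (t - 1)
                  + Bhat *\<^sub>v stackv nu (cmb g C uud) (t - int Tini) (t - 1)) $ i"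
                by (rule varx_cmb[OF Ahat_dim Bhat_dim data_varx]) (use t tT i in auto)
              have sy: "stackv ny (cmb g C yud) (t - int Tini) (t - 1)
                  = stackv ny (zext yj) (t - int Tini + d) (t - 1 + d)"
                by (rule stackv_cong) (use Suc.IH tm tT0 t in \<open>auto simp: Ys_def\<close>)
              have su: "stackv nu (cmb g C uud) (t - int Tini) (t - 1)
                  = stackv nu (zext uj) (t - int Tini + d) (t - 1 + d)"
                by (rule stackv_cong) (use HU tT0 t KN in \<open>auto simp: Us_def\<close>)
              define k where "k = t + d"
              have kN: "k \<in> {1..int N}" using t tT0 KN unfolding k_def d_def by auto
              have nK: "nat (k - 1) \<noteq> K" using tT0 unfolding k_def d_def by auto
              have e: "t - int Tini + d = k - int Tini" "t - 1 + d = k - 1" unfolding k_def by auto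
              have "yj k i = (Ahat *\<^sub>v stackv ny (zext yj) (k - int Tini) (k - 1)
                  + Bhat *\<^sub>v stackv nu (zext uj) (k - int Tini) (k - 1)) $ i"
                using recf[OF kN i] noise nK by simp
              moreover have "Ys t i = yj k i" using kN unfolding Ys_def zext_def k_def by auto
              ultimately show ?thesis using v sy su e by simp
            qed
          qed
        qed
      qed
      thus ?thesis by (metis nat_0_le order_trans zero_le_one)
    qed
    show "\<exists>g. g \<in> carrier_vec (T - N - Tini + 1)
            \<and> (\<forall>k\<in>{1..int K}. (\<forall>i<nu. uj k i = 0) \<and> (\<forall>i<ny. yj k i = 0))
            \<and> (\<forall>i<ny. yj (int K + 1) i = w (pce_I Lw j) i)
            \<and> (H1 @\<^sub>r H2 @\<^sub>r H3 @\<^sub>r H4) *\<^sub>v g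
              = 0\<^sub>v ((Tini - 1) * nu) @\<^sub>v 0\<^sub>v ((Tini - 1) * ny)
                @\<^sub>v stackv nu uj (int K + 1) (int N)
                @\<^sub>v stackv ny yj (int K + 1) (int N)"
    proof (intro exI conjI)
      show "g \<in> carrier_vec (T - N - Tini + 1)" using gC unfolding C_def .
      show "\<forall>k\<in>{1..int K}. (\<forall>i<nu. uj k i = 0) \<and> (\<forall>i<ny. yj k i = 0)" using caus Z1 by auto
      show "\<forall>i<ny. yj (int K + 1) i = w (pce_I Lw j) i" using Z2 .
      have P1: "\<forall>s<Tini - 1. \<forall>i<nu. cmb g C uud (1 + int s) i = 0"
      proof (intro allI impI)
        fix s i assume s: "s < Tini - 1" and i: "i < nu"
        have "cmb g C uud (1 + int s) i = Us (1 + int s) i" using HU s i by auto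
        also have "\<dots> = 0" using caus s i unfolding Us_def zext_def d_def by auto
        finally show "cmb g C uud (1 + int s) i = 0" .
      qed
      have P2: "\<forall>s<Tini - 1. \<forall>i<ny. cmb g C yud (1 + int s) i = 0"
      proof (intro allI impI)
        fix s i assume s: "s < Tini - 1" and i: "i < ny"
        have "cmb g C yud (1 + int s) i = Ys (1 + int s) i" using YA s i KN by auto
        also have "\<dots> = 0" using Z1 s i unfolding Ys_def zext_def d_def by auto
        finally show "cmb g C yud (1 + int s) i = 0" .
      qed
      have P3: "\<forall>s<N - K. \<forall>i<nu. cmb g C uud (int Tini + int s) i = uj (int K + 1 + int s) i"
      proof (intro allI impI)
        fix s i assume s: "s < N - K" and i: "i < nu"
        have "cmb g C uud (int Tini + int s) i = Us (int Tini + int s) i" using HU s i Tini_pos by auto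
        also have "\<dots> = uj (int K + 1 + int s) i" unfolding Us_def zext_def d_def by (auto simp: algebra_simps)
        finally show "cmb g C uud (int Tini + int s) i = uj (int K + 1 + int s) i" .
      qed
      have P4: "\<forall>s<N - K. \<forall>i<ny. cmb g C yud (int Tini + int s) i = yj (int K + 1 + int s) i"
      proof (intro allI impI)
        fix s i assume s: "s < N - K" and i: "i < ny"
        have "cmb g C yud (int Tini + int s) i = Ys (int Tini + int s) i" using YA s i Tini_pos by auto
        also have "\<dots> = yj (int K + 1 + int s) i" unfolding Ys_def zext_def d_def by (auto simp: algebra_simps)
        finally show "cmb g C yud (int Tini + int s) i = yj (int K + 1 + int s) i" .
      qed
      show "(H1 @\<^sub>r H2 @\<^sub>r H3 @\<^sub>r H4) *\<^sub>v g
              = 0\<^sub>v ((Tini - 1) * nu) @\<^sub>v 0\<^sub>v ((Tini - 1) * ny)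
                @\<^sub>v stackv nu uj (int K + 1) (int N)
                @\<^sub>v stackv ny yj (int K + 1) (int N)"
        using bigeq[OF gC] P1 P2 P3 P4 by blast
    qed
  next
    assume "\<exists>g. g \<in> carrier_vec (T - N - Tini + 1)
            \<and> (\<forall>k\<in>{1..int K}. (\<forall>i<nu. uj k i = 0) \<and> (\<forall>i<ny. yj k i = 0))
            \<and> (\<forall>i<ny. yj (int K + 1) i = w (pce_I Lw j) i)
            \<and> (H1 @\<^sub>r H2 @\<^sub>r H3 @\<^sub>r H4) *\<^sub>v g
              = 0\<^sub>v ((Tini - 1) * nu) @\<^sub>v 0\<^sub>v ((Tini - 1) * ny)
                @\<^sub>v stackv nu uj (int K + 1) (int N)
                @\<^sub>v stackv ny yj (int K + 1) (int N)"
    then obtain g where gC0: "g \<in> carrier_vec (T - N - Tini + 1)"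
      and zr: "\<forall>k\<in>{1..int K}. (\<forall>i<nu. uj k i = 0) \<and> (\<forall>i<ny. yj k i = 0)"
      and y1: "\<forall>i<ny. yj (int K + 1) i = w (pce_I Lw j) i"
      and eq: "(H1 @\<^sub>r H2 @\<^sub>r H3 @\<^sub>r H4) *\<^sub>v g
              = 0\<^sub>v ((Tini - 1) * nu) @\<^sub>v 0\<^sub>v ((Tini - 1) * ny)
                @\<^sub>v stackv nu uj (int K + 1) (int N)
                @\<^sub>v stackv ny yj (int K + 1) (int N)" by blast
    have gC: "g \<in> carrier_vec C" using gC0 unfolding C_def .
    have PP: "(\<forall>s<Tini - 1. \<forall>i<nu. cmb g C uud (1 + int s) i = 0)
       \<and> (\<forall>s<Tini - 1. \<forall>i<ny. cmb g C yud (1 + int s) i = 0)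
       \<and> (\<forall>s<N - K. \<forall>i<nu. cmb g C uud (int Tini + int s) i = uj (int K + 1 + int s) i)
       \<and> (\<forall>s<N - K. \<forall>i<ny. cmb g C yud (int Tini + int s) i = yj (int K + 1 + int s) i)"
      by (rule iffD1[OF bigeq[OF gC] eq])
    note P1 = PP[THEN conjunct1] and P2 = PP[THEN conjunct2, THEN conjunct1]
      and P3 = PP[THEN conjunct2, THEN conjunct2, THEN conjunct1]
      and P4 = PP[THEN conjunct2, THEN conjunct2, THEN conjunct2]
    have UA: "\<forall>t. 1 \<le> t \<and> t \<le> int Tini + int N - int K - 1 \<longrightarrow> (\<forall>i<nu. cmb g C uud t i = zext uj (t + d) i)"
    proof (intro allI impI)
      fix t i assume t: "1 \<le> t \<and> t \<le> int Tini + int N - int K - 1" and i: "i < nu"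
      show "cmb g C uud t i = zext uj (t + d) i"
      proof (cases "t \<le> int Tini - 1")
        case True
        have s: "nat (t - 1) < Tini - 1" "1 + int (nat (t - 1)) = t" using t True by auto
        have "cmb g C uud t i = 0" using P1 s i by metis
        moreover have "zext uj (t + d) i = 0" using zr True i unfolding zext_def d_def by auto
        ultimately show ?thesis by simp
      next
        case False
        have s: "nat (t - int Tini) < N - K" "int Tini + int (nat (t - int Tini)) = t"
          "int K + 1 + int (nat (t - int Tini)) = t + d" using t False unfolding d_def by auto
        have "cmb g C uud t i = uj (t + d) i" using P3 s i by metis
        moreover have "zext uj (t + d) i = uj (t + d) i" using False unfolding zext_def d_def by auto
        ultimately show ?thesis by simp
      qed
    qed
    have YA: "\<forall>t. 1 \<le> t \<and> t \<le> int Tini + int N - int K - 1 \<longrightarrow> (\<forall>i<ny. cmb g C yud t i = zext yj (t + d) i)"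
    proof (intro allI impI)
      fix t i assume t: "1 \<le> t \<and> t \<le> int Tini + int N - int K - 1" and i: "i < ny"
      show "cmb g C yud t i = zext yj (t + d) i"
      proof (cases "t \<le> int Tini - 1")
        case True
        have s: "nat (t - 1) < Tini - 1" "1 + int (nat (t - 1)) = t" using t True by auto
        have "cmb g C yud t i = 0" using P2 s i by metis
        moreover have "zext yj (t + d) i = 0" using zr True i unfolding zext_def d_def by auto
        ultimately show ?thesis by simp
      next
        case False
        have s: "nat (t - int Tini) < N - K" "int Tini + int (nat (t - int Tini)) = t"
          "int K + 1 + int (nat (t - int Tini)) = t + d" using t False unfolding d_def by auto
        have "cmb g C yud t i = yj (t + d) i" using P4 s i by metis
        moreover have "zext yj (t + d) i = yj (t + d) i" using False unfolding zext_def d_def by auto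
        ultimately show ?thesis by simp
      qed
    qed
    have REC: "yj k i =
             (Ahat *\<^sub>v stackv ny (zext yj) (k - int Tini) (k - 1)
              + Bhat *\<^sub>v stackv nu (zext uj) (k - int Tini) (k - 1)) $ i
             + pce_coef EW w Lw j (nat (k - 1)) i" if k: "k \<in> {1..int N}" and i: "i < ny" for k i
    proof (cases "k \<le> int K")
      case True
      have r0: "(Ahat *\<^sub>v stackv ny (zext yj) (k - int Tini) (k - 1)
              + Bhat *\<^sub>v stackv nu (zext uj) (k - int Tini) (k - 1)) $ i = 0"
        by (rule rhs0) (use zr True i in auto)
      have "nat (k - 1) \<noteq> K" using True k by auto
      hence n0: "pce_coef EW w Lw j (nat (k - 1)) i = 0" using noise by simp
      have "yj k i = 0" using zr True k i by auto
      thus ?thesis using r0 n0 by simp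
    next
      case kK: False
      show ?thesis
      proof (cases "k = int K + 1")
        case True
        have r0: "(Ahat *\<^sub>v stackv ny (zext yj) (k - int Tini) (k - 1)
              + Bhat *\<^sub>v stackv nu (zext uj) (k - int Tini) (k - 1)) $ i = 0"
          by (rule rhs0) (use zr True i in auto)
        have n0: "pce_coef EW w Lw j (nat (k - 1)) i = w (pce_I Lw j) i" using noise True by simp
        show ?thesis using r0 n0 y1 True i by simp
      next
        case False
        define t where "t = k - d"
        have t1: "int Tini + 1 \<le> t" "t \<le> int Tini + int N - int K - 1"
          using k kK False unfolding t_def d_def by auto
        have tT: "t + int C - 1 \<le> int T" using t1 T_ge KN unfolding C_def by auto
        have yk: "yj k i = cmb g C yud t i" using YA t1 i k unfolding t_def zext_def by auto
        have v: "cmb g C yud t i = (Ahat *\<^sub>v stackv ny (cmb g C yud) (t - int Tini) (t - 1)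
                  + Bhat *\<^sub>v stackv nu (cmb g C uud) (t - int Tini) (t - 1)) $ i"
          by (rule varx_cmb[OF Ahat_dim Bhat_dim data_varx]) (use t1 tT i in auto)
        have sy: "stackv ny (cmb g C yud) (t - int Tini) (t - 1)
                  = stackv ny (zext yj) (t - int Tini + d) (t - 1 + d)"
          by (rule stackv_cong) (use YA t1 in auto)
        have su: "stackv nu (cmb g C uud) (t - int Tini) (t - 1)
                  = stackv nu (zext uj) (t - int Tini + d) (t - 1 + d)"
          by (rule stackv_cong) (use UA t1 in auto)
        have e: "t - int Tini + d = k - int Tini" "t - 1 + d = k - 1" unfolding t_def by auto
        have "nat (k - 1) \<noteq> K" using kK False k by auto
        hence n0: "pce_coef EW w Lw j (nat (k - 1)) i = 0" using noise by simp
        show ?thesis using yk v sy su e n0 by simp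
      qed
    qed
    show "(\<forall>k\<in>{1..int N}. \<forall>i<ny. yj k i =
             (Ahat *\<^sub>v stackv ny (zext yj) (k - int Tini) (k - 1)
              + Bhat *\<^sub>v stackv nu (zext uj) (k - int Tini) (k - 1)) $ i
             + pce_coef EW w Lw j (nat (k - 1)) i)
          \<and> (\<forall>k\<in>{1..int K}. \<forall>i<nu. uj k i = 0)"
      using REC zr by blast
  qed
qed
end
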